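(* Fix $\vartheta\in\mathbb{C}$, let $r_1,r_2$ be the two roots (listed with multiplicity, so $r_1=r_2=-1$ if $\vartheta=0$) of $\vartheta-(\mathtt{h}+1)^2$, let $\omega=3+\max(\mathrm{Re}\, r_1,\mathrm{Re}\, r_2)$ and $\mathbb{C}_\omega=\{z\in\mathbb{C}: \mathrm{Re}\,z\in[\omega,\omega+2)\}$. Let $u=c\prod_{t\in\mathbb{C}_\omega}(\mathtt{h}-t)^{\mathtt{m}(t)}$ with $c\in\mathbb{C}^\times$ and $\mathtt{m}:\mathbb{C}_\omega\to\mathbb{Z}$ of finite support. Let $K_u\subset\mathbb{C}(\mathtt{h})$ be the $\mathbb{C}$-linear span of: (i) $\mathbb{C}[\mathtt{h}]$; (ii) for each $s\in\mathbb{C}_\omega$ with $\mathtt{m}(s)<0$, the elements $\frac{1}{(\mathtt{h}-s-2i)^k}$ with $i\in\mathbb{Z}_{\geq0}$ and $1\leq k\leq-\mathtt{m}(s)$; (iii) for each $s\in\mathbb{C}_\omega$ with $\mathtt{m}(s)>0$, the elements $\frac{1}{(\mathtt{h}-s+2i)^k}$ with $i\in\mathbb{Z}_{>0}$ and $1\leq k\leq \mathtt{m}(s)-|\{j\in\{1,2\}: r_j\in\{s-4,s-6,\dots,s-2i\}\}|$. Then $K_u=L_u$.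
   Context: $\mathfrak{g}=\mathfrak{sl}_2(\mathbb{C})$ with basis $\mathtt{e},\mathtt{f},\mathtt{h}$, $[\mathtt{h},\mathtt{e}]=2\mathtt{e}$, $[\mathtt{h},\mathtt{f}]=-2\mathtt{f}$, $[\mathtt{e},\mathtt{f}]=\mathtt{h}$; Casimir element $\mathtt{c}=(\mathtt{h}+1)^2+4\mathtt{f}\mathtt{e}$; $U_\vartheta=U(\mathfrak{g})/U(\mathfrak{g})(\mathtt{c}-\vartheta)$. Let $\Bbbk=\mathbb{C}(\mathtt{h})$, $\sigma$ the automorphism of $\Bbbk$ fixing $\mathbb{C}$ with $\sigma(\mathtt{h})=\mathtt{h}-2$, and $R=\Bbbk[x,x^{-1},\sigma]$ (skew Laurent polynomials: $xr=\sigma(r)x$ for $r\in\Bbbk$). The assignment $\mathtt{e}\mapsto x$, $\mathtt{f}\mapsto\frac{\vartheta-(\mathtt{h}+1)^2}{4}x^{-1}$, $\mathtt{h}\mapsto\mathtt{h}$ gives an injective algebra homomorphism $U_\vartheta\to R$. $N_u$ is $\Bbbk$ with the $R$-module structure where $\Bbbk$ acts by multiplication and $x\cdot b=\sigma(b)u$; as a $U_\vartheta$-module, $\mathtt{h}$ acts by multiplication, $\mathtt{e}\cdot b=\sigma(b)u$ and $\mathtt{f}\cdot b=\frac{\vartheta-(\mathtt{h}+1)^2}{4}\cdot\frac{\sigma^{-1}(b)}{\sigma^{-1}(u)}$. It is known that $N_u$, viewed as a $U_\vartheta$-module, has a unique simple submodule; this is denoted $L_u$ (and $K_u$ is regarded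 as a subspace of $N_u=\mathbb{C}(\mathtt{h})$). *)

theory Defs
  imports Complex_Main "HOL-Computational_Algebra.Computational_Algebra"
begin

type_synonym ratfun = "complex poly fract"

definition hvar :: ratfun where
  "hvar = to_fract [:0, 1:]"

definition cst :: "complex \<Rightarrow> ratfun" where
  "cst a = to_fract [:a:]"

text \<open>Shift automorphism: b(h) maps to b(h + a).  sigma = shift (-2), sigma inverse = shift 2.\<close>
definition shift :: "complex \<Rightarrow> ratfun \<Rightarrow> ratfun" where
  "shift a b = (case (SOME (p, q). q \<noteq> 0 \<and> b = Fract p q) of (p, q) \<Rightarrow>
      Fract (pcompose p [:a, 1:]) (pcompose q [:a, 1:]))"

definition sigma :: "ratfun \<Rightarrow> ratfun" where
  "sigma = shift (-2)"

definition sigma_inv :: "ratfun \<Rightarrow> ratfun" where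
  "sigma_inv = shift 2"

definition act_h :: "ratfun \<Rightarrow> ratfun" where
  "act_h b = hvar * b"

definition act_e :: "ratfun \<Rightarrow> ratfun \<Rightarrow> ratfun" where
  "act_e u b = sigma b * u"

definition act_f :: "complex \<Rightarrow> ratfun \<Rightarrow> ratfun \<Rightarrow> ratfun" where
  "act_f \<theta> u b = ((cst \<theta> - (hvar + 1)^2) / cst 4) * (sigma_inv b / sigma_inv u)"

text \<open>U_theta-submodules of N_u: complex subspaces stable under h, e, f
  (U_theta is generated by e, f, h).\<close>
definition is_submodule :: "complex \<Rightarrow> ratfun \<Rightarrow> ratfun set \<Rightarrow> bool" where
  "is_submodule \<theta> u M \<longleftrightarrow>
     0 \<in> M \<and> (\<forall>x\<in>M. \<forall>y\<in>M. x + y \<in> M) \<and> (\<forall>a. \<forall>x\<in>M. cst a * x \<in> M) \<and>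
     (\<forall>x\<in>M. act_h x \<in> M) \<and> (\<forall>x\<in>M. act_e u x \<in> M) \<and> (\<forall>x\<in>M. act_f \<theta> u x \<in> M)"

definition is_simple_submodule :: "complex \<Rightarrow> ratfun \<Rightarrow> ratfun set \<Rightarrow> bool" where
  "is_simple_submodule \<theta> u M \<longleftrightarrow> is_submodule \<theta> u M \<and> M \<noteq> {0} \<and>
     (\<forall>M'. is_submodule \<theta> u M' \<and> M' \<subseteq> M \<longrightarrow> M' = {0} \<or> M' = M)"

definition L_u :: "complex \<Rightarrow> ratfun \<Rightarrow> ratfun set" where
  "L_u \<theta> u = (THE M. is_simple_submodule \<theta> u M)"

definition cspan :: "ratfun set \<Rightarrow> ratfun set" where
  "cspan S = {(\<Sum>x\<in>T. cst (c x) * x) | T c. finite T \<and> T \<subseteq> S}"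

end

theory Submission
  imports Defs "HOL-Computational_Algebra.Field_as_Ring"
begin
declare mult_pCons_left[simp del]

lemma coprime_bezout_poly:
  fixes a b :: "complex poly"
  assumes "coprime a b"
  shows "\<exists>x y. x * a + y * b = 1"
proof -
  have "gcd a b = 1" using assms by (simp add: coprime_iff_gcd_eq_1)
  then show ?thesis using bezout_coefficients_fst_snd[of a b] by metis
qed

definition P :: "complex multiset \<Rightarrow> complex poly" where
  "P X = prod_mset (image_mset (\<lambda>z. [:-z,1:]) X)"

lemma P_empty[simp]: "P {#} = 1" by (simp add: P_def)
lemma P_add[simp]: "P (X + Y) = P X * P Y" by (simp add: P_def)
lemma P_add_mset[simp]: "P (add_mset x X) = [:-x,1:] * P X" by (simp add: P_def)
lemma P_single: "P {#z#} = [:-z,1:]" by simp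
lemma P_nz[simp]: "P X \<noteq> 0" by (induction X) (auto simp del: mult_pCons_left)
lemma poly_P: "poly (P X) w = 0 \<longleftrightarrow> w \<in># X"
  by (induction X) (auto simp del: mult_pCons_left)
lemma order_P: "order w (P X) = count X w"
proof (induction X)
  case empty then show ?case by simp
next
  case (add x X)
  have "order w [:-x,1:] = (if x = w then 1 else 0)"
    using order_power_n_n[of w 1] by (auto intro: order_0I)
  moreover have "[:-x,1:] * P X \<noteq> 0" by simp
  ultimately show ?case using add order_mult[of "[:-x,1:]" "P X" w] by auto
qed
lemma P_replicate: "P (replicate_mset k z) = [:-z,1:]^k"
  by (induction k) auto
lemma P_pcompose: "pcompose (P X) [:a,1:] = P (image_mset (\<lambda>z. z - a) X)"
proof (induction X)
  case empty then show ?case by (simp add: pcompose_1)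
next
  case (add x X)
  have "pcompose [:-x,1:] [:a,1:] = [:-(x-a),1:]" by (simp add: pcompose_pCons)
  then show ?case using add by (simp add: pcompose_mult del: mult_pCons_left)
qed
lemma count_shift: "count (image_mset (\<lambda>z::complex. z - a) X) w = count X (w + a)"
proof -
  have "(\<lambda>z::complex. z - a) -` {w} \<inter> set_mset X = (if w + a \<in># X then {w + a} else {})" by auto
  then show ?thesis unfolding count_image_mset
    by (auto simp: not_in_iff)
qed
lemma P_dvd: "X \<subseteq># Y \<Longrightarrow> P X dvd P Y"
  by (metis P_add dvd_triv_left subset_mset.add_diff_inverse)
lemma P_cancel: "to_fract (P A) / to_fract (P D) = to_fract (P (A - D)) / to_fract (P (D - A))"
proof -
  have A: "A = (A - D) + (A \<inter># D)" by (simp add: multiset_eq_iff) linarith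
  have D: "D = (D - A) + (A \<inter># D)" by (simp add: multiset_eq_iff) linarith
  have "to_fract (P A) / to_fract (P D) = (to_fract (P (A - D)) * to_fract (P (A \<inter># D))) / (to_fract (P (D - A)) * to_fract (P (A \<inter># D)))"
    by (subst A, subst (2) D) (simp only: P_add to_fract_mult)
  then show ?thesis by simp
qed

lemma to_fract_prod: "to_fract (prod f A) = (\<Prod>x\<in>A. to_fract (f x))"
  by (induction A rule: infinite_finite_induct) auto

lemma to_fract_power: "to_fract (p ^ n) = to_fract p ^ n"
  by (induction n) auto

lemma to_fract_smult: "to_fract (smult a p) = cst a * to_fract p"
  by (simp add: cst_def mult_pCons_left flip: to_fract_mult)

lemma hvar_minus_cst: "hvar - cst t = to_fract [:-t,1:]"
  by (simp add: hvar_def cst_def flip: to_fract_diff)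

lemma fract_rep: "\<exists>p q. q \<noteq> 0 \<and> (x::ratfun) = to_fract p / to_fract q"
  by (cases x) (auto simp: Fract_conv_to_fract)

lemma pcomp_nz: "q \<noteq> 0 \<Longrightarrow> pcompose q [:a,1::complex:] \<noteq> 0"
  using pcompose_eq_0[of q "[:a,1:]"] by auto

lemma shift_frac:
  assumes q: "q \<noteq> 0"
  shows "shift a (to_fract p / to_fract q) = to_fract (pcompose p [:a,1:]) / to_fract (pcompose q [:a,1:])"
proof -
  define pr where "pr = (SOME (p', q'). q' \<noteq> 0 \<and> to_fract p / to_fract q = Fract p' q')"
  have ex: "\<exists>pq. (\<lambda>(p', q'). q' \<noteq> 0 \<and> to_fract p / to_fract q = Fract p' q') pq"
    using q by (intro exI[of _ "(p,q)"]) (simp add: Fract_conv_to_fract)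
  obtain p' q' where pr: "pr = (p', q')" by (cases pr)
  have h: "q' \<noteq> 0 \<and> to_fract p / to_fract q = Fract p' q'"
    using someI_ex[OF ex] unfolding pr_def[symmetric] pr by simp
  then have "Fract p q = Fract p' q'" by (simp add: Fract_conv_to_fract)
  then have eq: "p * q' = p' * q" using h q by (simp add: eq_fract)
  have "shift a (to_fract p / to_fract q) = Fract (pcompose p' [:a,1:]) (pcompose q' [:a,1:])"
    unfolding shift_def pr_def[symmetric] pr by simp
  also have "\<dots> = Fract (pcompose p [:a,1:]) (pcompose q [:a,1:])"
  proof -
    have "pcompose p' [:a,1:] * pcompose q [:a,1:] = pcompose p [:a,1:] * pcompose q' [:a,1:]"
      using eq by (simp flip: pcompose_mult)
    then show ?thesis using h q pcomp_nz by (simp add: eq_fract)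
  qed
  finally show ?thesis by (simp add: Fract_conv_to_fract)
qed

lemma shift_poly: "shift a (to_fract p) = to_fract (pcompose p [:a,1:])"
  using shift_frac[of 1 a p] by (simp add: pcompose_1)

lemma P_prod_form:
  assumes "finite A" "set_mset X \<subseteq> A"
  shows "P X = (\<Prod>y\<in>A. [:-y,1:] ^ count X y)"
  using assms(2)
proof (induction X)
  case empty then show ?case by simp
next
  case (add x X)
  then have xA: "x \<in> A" and XA: "set_mset X \<subseteq> A" by auto
  have "(\<Prod>y\<in>A. [:-y,1:] ^ count (add_mset x X) y)
      = [:-x,1:] ^ count (add_mset x X) x * (\<Prod>y\<in>A - {x}. [:-y,1:] ^ count (add_mset x X) y)"
    using xA assms(1) by (simp add: prod.remove)
  also have "(\<Prod>y\<in>A - {x}. [:-y,1:] ^ count (add_mset x X) y) = (\<Prod>y\<in>A - {x}. [:-y,1:] ^ count X y)"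
    by (intro prod.cong) auto
  also have "[:-x,1:] ^ count (add_mset x X) x = [:-x,1:] * [:-x,1:] ^ count X x" by simp
  also have "[:-x,1:] * [:-x,1:] ^ count X x * (\<Prod>y\<in>A - {x}. [:-y,1:] ^ count X y)
     = [:-x,1:] * (\<Prod>y\<in>A. [:-y,1:] ^ count X y)"
    using xA assms(1) by (simp add: prod.remove mult.assoc)
  finally show ?case using add XA by simp
qed

locale thm9 =
  fixes \<theta> r1 r2 c :: complex and m :: "complex \<Rightarrow> int" and \<omega> :: real
    and C\<omega> :: "complex set" and u :: ratfun
  assumes roots: "[:\<theta> - 1, -2, -1:] = - ([:-r1, 1:] * [:-r2, 1:])"
    and omega: "\<omega> = 3 + max (Re r1) (Re r2)"
    and Comega: "C\<omega> = {z. \<omega> \<le> Re z \<and> Re z < \<omega> + 2}"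
    and c_nz: "c \<noteq> 0"
    and m_fin: "finite {t. m t \<noteq> 0}"
    and m_supp: "\<forall>t. m t \<noteq> 0 \<longrightarrow> t \<in> C\<omega>"
    and u_def: "u = cst c * (\<Prod>t\<in>{t. m t \<noteq> 0}. (hvar - cst t) powi (m t))"
begin

definition Mpos where "Mpos = Abs_multiset (\<lambda>t. nat (m t))"
definition Mneg where "Mneg = Abs_multiset (\<lambda>t. nat (- m t))"

lemma count_Mpos: "count Mpos t = nat (m t)"
proof -
  have "finite {x. 0 < nat (m x)}" by (rule finite_subset[OF _ m_fin]) auto
  then show ?thesis unfolding Mpos_def by (simp add: count_Abs_multiset)
qed

lemma count_Mneg: "count Mneg t = nat (- m t)"
proof -
  have "finite {x. 0 < nat (- m x)}" by (rule finite_subset[OF _ m_fin]) auto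
  then show ?thesis unfolding Mneg_def by (simp add: count_Abs_multiset)
qed

lemma u_frac: "u = to_fract (smult c (P Mpos)) / to_fract (P Mneg)"
proof -
  define S where "S = {t. m t \<noteq> 0}"
  have fS: "finite S" using m_fin S_def by simp
  have sp: "set_mset Mpos \<subseteq> S" "set_mset Mneg \<subseteq> S"
    by (auto simp: S_def count_Mpos count_Mneg simp flip: count_greater_zero_iff)
  have pw: "(hvar - cst t) powi (m t) = to_fract ([:-t,1:] ^ count Mpos t) / to_fract ([:-t,1:] ^ count Mneg t)" for t
    by (auto simp: count_Mpos count_Mneg hvar_minus_cst power_int_def to_fract_power power_inverse divide_inverse)
  have "u = cst c * (\<Prod>t\<in>S. to_fract ([:-t,1:] ^ count Mpos t) / to_fract ([:-t,1:] ^ count Mneg t))"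
    unfolding u_def S_def[symmetric] pw ..
  also have "\<dots> = cst c * (to_fract (\<Prod>t\<in>S. [:-t,1:] ^ count Mpos t) / to_fract (\<Prod>t\<in>S. [:-t,1:] ^ count Mneg t))"
    by (simp add: prod_dividef to_fract_prod)
  also have "\<dots> = to_fract (smult c (P Mpos)) / to_fract (P Mneg)"
    using P_prod_form[OF fS sp(1)] P_prod_form[OF fS sp(2)] by (simp add: to_fract_smult)
  finally show ?thesis .
qed

end

definition shm :: "complex \<Rightarrow> complex multiset \<Rightarrow> complex multiset" where
  "shm a X = image_mset (\<lambda>z. z + a) X"

lemma count_shm: "count (shm a X) w = count X (w - a)"
  using count_shift[of "-a" X w] by (simp add: shm_def)

lemma P_shift: "pcompose (P X) [:a,1:] = P (shm (-a) X)"
  by (simp add: P_pcompose shm_def)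

lemma shm_add[simp]: "shm a (X + Y) = shm a X + shm a Y" by (simp add: shm_def)

lemma cst_nz[simp]: "cst a = 0 \<longleftrightarrow> a = 0" by (simp add: cst_def)

lemma frac_eqI: "y \<noteq> 0 \<Longrightarrow> y' \<noteq> 0 \<Longrightarrow> x * y' = x' * y \<Longrightarrow> to_fract x / to_fract y = to_fract (x'::complex poly) / to_fract y'"
  unfolding Fract_conv_to_fract[symmetric] by (simp add: eq_fract(1))

lemma smult_conv: "smult a p = [:a:] * p" by (simp add: mult_pCons_left)

lemma poly_id: "[:\<theta>::complex:] - [:1,1:]^2 = [:\<theta> - 1, -2, -1:]"
  by (simp add: power2_eq_square mult_pCons_left)

context thm9 begin

lemma a_frac: "(cst \<theta> - (hvar + 1)^2) / cst 4 = to_fract (smult (-1/4) (P {#r1, r2#}))"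
proof -
  have h0: "[:0,1:] + 1 = [:1,1::complex:]" by (simp add: one_pCons)
  have h1: "hvar + 1 = to_fract [:1,1:]" unfolding hvar_def by (metis h0 to_fract_1 to_fract_add)
  have "cst \<theta> - (hvar + 1)^2 = to_fract ([:\<theta>:] - [:1,1:]^2)"
    unfolding h1 by (simp only: cst_def to_fract_power to_fract_diff)
  also have "[:\<theta>:] - [:1,1:]^2 = [:\<theta> - 1, -2, -1:]" by (rule poly_id)
  also have "\<dots> = - P {#r1, r2#}" using roots by (simp only: P_add_mset P_empty mult_1_right)
  finally have eq: "cst \<theta> - (hvar + 1)^2 = to_fract (- P {#r1, r2#})" .
  have "(cst \<theta> - (hvar + 1)^2) / cst 4 = to_fract (- P {#r1, r2#}) / to_fract [:4:]"
    unfolding eq by (simp only: cst_def)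
  also have "\<dots> = to_fract (smult (-1/4) (P {#r1, r2#})) / to_fract 1"
    by (rule frac_eqI) (simp_all add: mult_pCons_right)
  finally show ?thesis by (simp only: to_fract_1 div_by_1)
qed

lemma e_frac: "act_e u (to_fract p / to_fract (P X))
   = to_fract (smult c (pcompose p [:-2,1:]) * P Mpos) / to_fract (P (shm 2 X + Mneg))"
proof -
  have "act_e u (to_fract p / to_fract (P X)) = to_fract (pcompose p [:-2,1:]) / to_fract (P (shm 2 X)) * u"
    unfolding act_e_def sigma_def by (simp add: shift_frac P_shift)
  also have "\<dots> = to_fract (smult c (pcompose p [:-2,1:]) * P Mpos) / to_fract (P (shm 2 X + Mneg))"
    unfolding u_frac by (simp add: to_fract_smult)
  finally show ?thesis .
qed

lemma shift_u: "shift 2 u = to_fract (smult c (P (shm (-2) Mpos))) / to_fract (P (shm (-2) Mneg))"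
  unfolding u_frac by (simp add: shift_frac P_shift pcompose_smult)

lemma poly_alg: "(c::complex) \<noteq> 0 \<Longrightarrow> smult (-1/4) A * B * Cc * (D * F) = smult (-1/(4*c)) B * (A * Cc) * (D * smult c F)"
  by (simp add: mult_ac)

lemma frac4: "cc \<noteq> 0 \<Longrightarrow> d \<noteq> 0 \<Longrightarrow> e \<noteq> 0 \<Longrightarrow>
   to_fract a * ((to_fract b / to_fract cc)/(to_fract d/ to_fract e)) = to_fract (a*b*(e::complex poly))/to_fract(cc*d)"
  by (simp only: to_fract_mult) (simp add: divide_simps)

lemma f_frac: "act_f \<theta> u (to_fract p / to_fract (P X))
   = to_fract (smult (-1/(4*c)) (pcompose p [:2,1:]) * P ({#r1, r2#} + shm (-2) Mneg)) / to_fract (P (shm (-2) X + shm (-2) Mpos))"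
proof -
  have "act_f \<theta> u (to_fract p / to_fract (P X)) = to_fract (smult (-1/4) (P {#r1, r2#})) *
     ((to_fract (pcompose p [:2,1:]) / to_fract (P (shm (-2) X))) / (to_fract (smult c (P (shm (-2) Mpos))) / to_fract (P (shm (-2) Mneg))))"
    unfolding act_f_def sigma_inv_def a_frac shift_u by (simp add: shift_frac P_shift)
  also have "\<dots> = to_fract (smult (-1/4) (P {#r1, r2#}) * pcompose p [:2,1:] * P (shm (-2) Mneg)) / to_fract (P (shm (-2) X) * smult c (P (shm (-2) Mpos)))"
    by (rule frac4) (simp_all add: c_nz)
  also have "\<dots> = to_fract (smult (-1/(4*c)) (pcompose p [:2,1:]) * P ({#r1, r2#} + shm (-2) Mneg)) / to_fract (P (shm (-2) X + shm (-2) Mpos))"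
    by (rule frac_eqI) (simp add: c_nz, simp, simp only: P_add, rule poly_alg[OF c_nz])
  finally show ?thesis .
qed

end

lemma P_cancel2: "to_fract (N * P A) / to_fract (P D) = to_fract (N * P (A - D)) / to_fract (P (D - A))"
proof -
  have "to_fract (N * P A) / to_fract (P D) = to_fract N * (to_fract (P A) / to_fract (P D))" by (simp only: to_fract_mult times_divide_eq_right)
  also have "\<dots> = to_fract N * (to_fract (P (A - D)) / to_fract (P (D - A)))" using P_cancel[of A D] by (rule arg_cong)
  finally show ?thesis by (simp only: to_fract_mult times_divide_eq_right)
qed

lemma frac_ext: "to_fract p / to_fract (P X) = to_fract (p * P Z) / to_fract (P (X + Z))"
  by (rule frac_eqI) (simp, simp, simp only: P_add mult_ac)

context thm9 begin

definition idx :: "complex \<Rightarrow> int" where "idx w = \<lfloor>(Re w - \<omega>) / 2\<rfloor>"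
definition rep :: "complex \<Rightarrow> complex" where "rep w = w - 2 * of_int (idx w)"
definition cnt :: "complex \<Rightarrow> nat \<Rightarrow> int" where
  "cnt s i = (if r1 \<in> {s - 2 * of_nat l | l. 2 \<le> l \<and> l \<le> i} then 1 else 0)
           + (if r2 \<in> {s - 2 * of_nat l | l. 2 \<le> l \<and> l \<le> i} then 1 else 0)"
definition B :: "complex \<Rightarrow> nat" where
  "B w = (if m (rep w) < 0 \<and> 0 \<le> idx w then nat (- m (rep w))
          else if 0 < m (rep w) \<and> idx w < 0 then nat (m (rep w) - cnt (rep w) (nat (- idx w)))
          else 0)"
definition Den where "Den = {X. \<forall>w. count X w \<le> B w}"
definition Kp where "Kp = {to_fract p / to_fract (P X) | p X. X \<in> Den}"

lemma rep_in: "rep w \<in> C\<omega>"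
proof -
  define t where "t = (Re w - \<omega>) / 2"
  have "of_int \<lfloor>t\<rfloor> \<le> t" "t < of_int \<lfloor>t\<rfloor> + 1" by linarith+
  then show ?thesis unfolding Comega rep_def idx_def t_def[symmetric] by (simp add: t_def field_simps)
qed

lemma w_decomp: "w = rep w + 2 * of_int (idx w)"
  by (simp add: rep_def)

lemma idx_rep:
  assumes "s \<in> C\<omega>"
  shows "idx (s + 2 * of_int k) = k" "rep (s + 2 * of_int k) = s"
proof -
  have "\<omega> \<le> Re s" "Re s < \<omega> + 2" using assms Comega by auto
  then have "\<lfloor>(Re s + 2 * of_int k - \<omega>) / 2\<rfloor> = k" by (intro floor_unique) (simp_all add: field_simps)
  then show "idx (s + 2 * of_int k) = k" by (simp add: idx_def)
  then show "rep (s + 2 * of_int k) = s" by (simp add: rep_def)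
qed

lemma idx_rep0: "s \<in> C\<omega> \<Longrightarrow> idx s = 0 \<and> rep s = s"
  using idx_rep[of s 0] by simp

lemma m_rep: "m w = (if idx w = 0 then m (rep w) else 0)"
proof (cases "m w = 0")
  case False
  then have "w \<in> C\<omega>" using m_supp by auto
  then show ?thesis using idx_rep0 by auto
next
  case True
  then show ?thesis by (auto simp: rep_def)
qed

lemma idx_shift: "idx (w + 2 * of_int k) = idx w + k" "rep (w + 2 * of_int k) = rep w"
proof -
  have eq: "w + 2 * of_int k = rep w + 2 * of_int (idx w + k)" by (subst w_decomp) simp
  show "idx (w + 2 * of_int k) = idx w + k" "rep (w + 2 * of_int k) = rep w"
    unfolding eq using idx_rep[OF rep_in, of w "idx w + k"] by simp_all
qed

lemma idx_p2: "idx (w + 2) = idx w + 1" "rep (w + 2) = rep w"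
  using idx_shift[of w 1] by simp_all
lemma idx_m2: "idx (w - 2) = idx w - 1" "rep (w - 2) = rep w"
  using idx_shift[of w "-1"] by simp_all

lemma cnt_mono: "i \<le> j \<Longrightarrow> cnt s i \<le> cnt s j"
  unfolding cnt_def by (auto split: if_splits)

lemma cnt_small: "i \<le> 1 \<Longrightarrow> cnt s i = 0"
  unfolding cnt_def by auto

lemma cnt_step: "cnt s (Suc i) \<le> cnt s i + (if r1 = s - 2 * of_nat (Suc i) then 1 else 0)
                                        + (if r2 = s - 2 * of_nat (Suc i) then 1 else 0)"
proof -
  have "{s - 2 * of_nat l | l. 2 \<le> l \<and> l \<le> Suc i} \<subseteq> {s - 2 * of_nat l | l. 2 \<le> l \<and> l \<le> i} \<union> {s - 2 * of_nat (Suc i)}"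
    using le_Suc_eq by auto
  then show ?thesis unfolding cnt_def by (auto split: if_splits)
qed

lemma e_key: "int (B (w - 2)) - m w \<le> int (B w)"
proof -
  define s where "s = rep w"
  define n where "n = idx w"
  have mw: "m w = (if n = 0 then m s else 0)" using m_rep s_def n_def by simp
  have Bw: "B w = (if m s < 0 \<and> 0 \<le> n then nat (- m s)
          else if 0 < m s \<and> n < 0 then nat (m s - cnt s (nat (- n))) else 0)"
    by (simp add: B_def s_def n_def)
  have Bw2: "B (w - 2) = (if m s < 0 \<and> 0 \<le> n - 1 then nat (- m s)
          else if 0 < m s \<and> n - 1 < 0 then nat (m s - cnt s (nat (- (n - 1)))) else 0)"
    by (simp add: B_def s_def n_def idx_m2)
  have mono: "cnt s (nat (- n)) \<le> cnt s (nat (- (n - 1)))" by (rule cnt_mono) simp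
  have c1: "cnt s (nat (- (n - 1))) = 0" if "n = 0" using that cnt_small by simp
  consider "m s < 0" | "m s = 0" | "m s > 0" by linarith
  then show ?thesis
  proof cases
    case 1 then show ?thesis unfolding mw Bw Bw2 by (cases "n = 0") auto
  next
    case 2 then show ?thesis unfolding mw Bw Bw2 by auto
  next
    case 3
    have "int (nat (m s - cnt s (nat (- (n - 1))))) \<le> int (nat (m s - cnt s (nat (- n))))"
      using mono by linarith
    then show ?thesis unfolding mw Bw Bw2 using 3 c1 by (cases "n = 0"; cases "n < 0") auto
  qed
qed

lemma f_key: "int (B (w + 2)) + m (w + 2) - (if r1 = w then 1 else 0) - (if r2 = w then 1 else 0) \<le> int (B w)"
proof -
  define s where "s = rep w"
  define n where "n = idx w"
  have mw: "m (w + 2) = (if n + 1 = 0 then m s else 0)" using m_rep[of "w+2"] s_def n_def idx_p2 by simp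
  have Bw: "B w = (if m s < 0 \<and> 0 \<le> n then nat (- m s)
          else if 0 < m s \<and> n < 0 then nat (m s - cnt s (nat (- n))) else 0)"
    by (simp add: B_def s_def n_def)
  have Bw2: "B (w + 2) = (if m s < 0 \<and> 0 \<le> n + 1 then nat (- m s)
          else if 0 < m s \<and> n + 1 < 0 then nat (m s - cnt s (nat (- (n + 1)))) else 0)"
    by (simp add: B_def s_def n_def idx_p2)
  have c1: "cnt s (nat (- n)) = 0" if "n = -1" using that cnt_small by simp
  have step: "cnt s (nat (- n)) \<le> cnt s (nat (- (n + 1))) + (if r1 = w then 1 else 0) + (if r2 = w then 1 else 0)"
    if "n \<le> -2"
  proof -
    have e: "nat (- n) = Suc (nat (- (n + 1)))" using that by simp
    have "w = s - 2 * of_nat (Suc (nat (- (n + 1))))"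
      using w_decomp[of w] that by (simp add: s_def n_def e[symmetric])
    then show ?thesis using cnt_step[of s "nat (- (n + 1))"] by (simp add: e)
  qed
  define rz :: int where "rz = (if r1 = w then 1 else 0) + (if r2 = w then 1 else 0)"
  have rz0: "rz \<ge> 0" by (simp add: rz_def)
  have goal: "int (B (w + 2)) + m (w + 2) - rz \<le> int (B w)"
  proof -
    consider "m s < 0" | "m s = 0" | "m s > 0" by linarith
    then show ?thesis
    proof cases
      case 1
      then show ?thesis unfolding mw Bw Bw2 using rz0 by (cases "n \<ge> 0"; cases "n = -1") auto
    next
      case 2
      then show ?thesis unfolding mw Bw Bw2 using rz0 by auto
    next
      case 3
      consider "n \<ge> 0" | "n = -1" | "n \<le> -2" by linarith
      then show ?thesis
      proof cases
        case 1 then show ?thesis unfolding mw Bw Bw2 using rz0 by auto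
      next
        case 2 then show ?thesis unfolding mw Bw Bw2 using rz0 3 c1 by auto
      next
        case 4: 3
        have st: "cnt s (nat (- n)) \<le> cnt s (nat (- (n + 1))) + rz" using step[OF 4] by (simp add: rz_def)
        have "int (nat (m s - cnt s (nat (- (n + 1))))) - rz \<le> int (nat (m s - cnt s (nat (- n))))"
          using st rz0 by linarith
        then show ?thesis unfolding mw Bw Bw2 using 3 4 by auto
      qed
    qed
  qed
  then show ?thesis by (simp add: rz_def)
qed

end

context thm9 begin

lemma Den_empty: "{#} \<in> Den" by (simp add: Den_def)

lemma Den_union: "X \<in> Den \<Longrightarrow> Y \<in> Den \<Longrightarrow> X \<union># Y \<in> Den"
  by (simp add: Den_def)

lemma KpI: "X \<in> Den \<Longrightarrow> to_fract p / to_fract (P X) \<in> Kp"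
  unfolding Kp_def by blast

lemma Kp_zero: "0 \<in> Kp" using KpI[OF Den_empty, of 0] by simp

lemma Kp_poly: "to_fract p \<in> Kp" using KpI[OF Den_empty, of p] by simp

lemma Kp_add: "x \<in> Kp \<Longrightarrow> y \<in> Kp \<Longrightarrow> x + y \<in> Kp"
proof -
  assume "x \<in> Kp" "y \<in> Kp"
  then obtain p X q Y where x: "x = to_fract p / to_fract (P X)" "X \<in> Den"
    and y: "y = to_fract q / to_fract (P Y)" "Y \<in> Den" unfolding Kp_def by blast
  have e1: "X + (Y - X) = X \<union># Y" "Y + (X - Y) = X \<union># Y" by (auto simp: multiset_eq_iff)
  have "x = to_fract (p * P (Y - X)) / to_fract (P (X \<union># Y))" using x(1) frac_ext[of p X "Y - X"] e1 by simp
  moreover have "y = to_fract (q * P (X - Y)) / to_fract (P (X \<union># Y))" using y(1) frac_ext[of q Y "X - Y"] e1 by simp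
  ultimately have "x + y = to_fract (p * P (Y - X) + q * P (X - Y)) / to_fract (P (X \<union># Y))"
    by (simp add: add_divide_distrib)
  then show ?thesis by (metis KpI Den_union x(2) y(2))
qed

lemma Kp_cst: "x \<in> Kp \<Longrightarrow> cst a * x \<in> Kp"
proof -
  assume "x \<in> Kp"
  then obtain p X where x: "x = to_fract p / to_fract (P X)" "X \<in> Den" unfolding Kp_def by blast
  have "cst a * x = to_fract (smult a p) / to_fract (P X)" using x(1) by (simp add: to_fract_smult)
  then show ?thesis by (metis KpI x(2))
qed

lemma Kp_h: "x \<in> Kp \<Longrightarrow> hvar * x \<in> Kp"
proof -
  assume "x \<in> Kp"
  then obtain p X where x: "x = to_fract p / to_fract (P X)" "X \<in> Den" unfolding Kp_def by blast
  have "hvar * x = to_fract ([:0,1:] * p) / to_fract (P X)" using x(1) by (simp add: hvar_def)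
  then show ?thesis by (metis KpI x(2))
qed

lemma Kp_e: "x \<in> Kp \<Longrightarrow> act_e u x \<in> Kp"
proof -
  assume "x \<in> Kp"
  then obtain p X where x: "x = to_fract p / to_fract (P X)" "X \<in> Den" unfolding Kp_def by blast
  define D where "D = shm 2 X + Mneg"
  have "act_e u x = to_fract (smult c (pcompose p [:-2,1:]) * P (Mpos - D)) / to_fract (P (D - Mpos))"
    unfolding x(1) e_frac D_def[symmetric] by (rule P_cancel2)
  moreover have "D - Mpos \<in> Den"
    unfolding Den_def
  proof safe
    fix w
    have b: "count X (w - 2) \<le> B (w - 2)" using x(2) by (simp add: Den_def)
    have "count (D - Mpos) w = (count X (w - 2) + nat (- m w)) - nat (m w)"
      by (simp add: D_def count_shm count_Mpos count_Mneg)
    then show "count (D - Mpos) w \<le> B w" using b e_key[of w] by arith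
  qed
  ultimately show ?thesis by (metis KpI)
qed

lemma Kp_f: "x \<in> Kp \<Longrightarrow> act_f \<theta> u x \<in> Kp"
proof -
  assume "x \<in> Kp"
  then obtain p X where x: "x = to_fract p / to_fract (P X)" "X \<in> Den" unfolding Kp_def by blast
  define D where "D = shm (-2) X + shm (-2) Mpos"
  define A where "A = {#r1, r2#} + shm (-2) Mneg"
  have "act_f \<theta> u x = to_fract (smult (-1/(4*c)) (pcompose p [:2,1:]) * P (A - D)) / to_fract (P (D - A))"
    unfolding x(1) f_frac D_def[symmetric] A_def[symmetric] by (rule P_cancel2)
  moreover have "D - A \<in> Den"
    unfolding Den_def
  proof safe
    fix w
    have b: "count X (w + 2) \<le> B (w + 2)" using x(2) by (simp add: Den_def)
    have "count (D - A) w = (count X (w + 2) + nat (m (w + 2))) - ((if w = r1 then 1 else 0) + (if w = r2 then 1 else 0) + nat (- m (w + 2)))"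
      by (simp add: D_def A_def count_shm count_Mpos count_Mneg)
    then show "count (D - A) w \<le> B w" using b f_key[of w] by (auto split: if_splits)
  qed
  ultimately show ?thesis by (metis KpI)
qed

lemma Kp_sub: "is_submodule \<theta> u Kp"
  unfolding is_submodule_def act_h_def using Kp_zero Kp_add Kp_cst Kp_h Kp_e Kp_f by simp

end

lemma sub_0: "is_submodule th v M \<Longrightarrow> 0 \<in> M" by (simp add: is_submodule_def)
lemma sub_add: "is_submodule th v M \<Longrightarrow> x \<in> M \<Longrightarrow> y \<in> M \<Longrightarrow> x + y \<in> M" by (simp add: is_submodule_def)
lemma sub_cst: "is_submodule th v M \<Longrightarrow> x \<in> M \<Longrightarrow> cst a * x \<in> M" by (simp add: is_submodule_def)
lemma sub_h: "is_submodule th v M \<Longrightarrow> x \<in> M \<Longrightarrow> hvar * x \<in> M" by (simp add: is_submodule_def act_h_def)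
lemma sub_e: "is_submodule th v M \<Longrightarrow> x \<in> M \<Longrightarrow> act_e v x \<in> M" by (simp add: is_submodule_def)
lemma sub_f: "is_submodule th v M \<Longrightarrow> x \<in> M \<Longrightarrow> act_f th v x \<in> M" by (simp add: is_submodule_def)

lemma sub_neg: "is_submodule th v M \<Longrightarrow> x \<in> M \<Longrightarrow> - x \<in> M"
proof -
  have "[:-1:] = - (1::complex poly)" by (simp add: one_pCons)
  then have "cst (-1) * x = - x" by (simp add: cst_def)
  then show "is_submodule th v M \<Longrightarrow> x \<in> M \<Longrightarrow> - x \<in> M" using sub_cst[of th v M x "-1"] by simp
qed

lemma sub_diff: "is_submodule th v M \<Longrightarrow> x \<in> M \<Longrightarrow> y \<in> M \<Longrightarrow> x - y \<in> M"
  using sub_add[of th v M x "-y"] sub_neg[of th v M y] by simp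

lemma pCons_split: "pCons a g = [:a:] + pCons 0 (1::complex poly) * g"
  by (simp add: mult_pCons_left)

lemma sub_poly: "is_submodule th v M \<Longrightarrow> x \<in> M \<Longrightarrow> to_fract g * x \<in> M"
proof (induction g rule: pCons_induct)
  case 0 then show ?case using sub_0 by simp
next
  case (pCons a g)
  have "to_fract (pCons a g) * x = cst a * x + hvar * (to_fract g * x)"
    by (subst pCons_split) (simp add: cst_def hvar_def distrib_right mult.assoc)
  then show ?case using pCons sub_add sub_cst sub_h by metis
qed

lemma bezout_inv:
  assumes sub: "is_submodule th v M" and one: "1 \<in> M"
    and y: "to_fract N / to_fract Q \<in> M" and cop: "coprime N Q" and Q: "Q \<noteq> 0"
  shows "inverse (to_fract Q) \<in> M"
proof -
  obtain a b where ab: "a * N + b * Q = 1" using coprime_bezout_poly[OF cop] by blast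
  have "to_fract a * (to_fract N / to_fract Q) + to_fract b * 1 = to_fract (a * N + b * Q) / to_fract Q"
    using Q by (simp add: field_simps)
  also have "\<dots> = inverse (to_fract Q)" using ab by (simp add: divide_inverse)
  finally show ?thesis using sub_add[OF sub sub_poly[OF sub y] sub_poly[OF sub one]] by metis
qed

lemma tool:
  assumes sub: "is_submodule th v M" and one: "1 \<in> M"
    and x: "to_fract N / to_fract D \<in> M" and N: "N \<noteq> 0" and D: "D \<noteq> 0"
    and ord: "order w N + d \<le> order w D"
  shows "inverse (to_fract ([:-w,1:] ^ d)) \<in> M"
proof -
  define L where "L = [:-w,1::complex:]"
  obtain N' where N': "N = L ^ order w N * N'" "\<not> L dvd N'" using order_decomp[OF N] L_def by blast
  obtain D' where D': "D = L ^ order w D * D'" using order_decomp[OF D] L_def by blast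
  define a where "a = order w N"
  define b where "b = order w D"
  have bad: "b = (b - a - d) + a + d" using ord a_def b_def by simp
  have D'nz: "D' \<noteq> 0" using D D' by auto
  have Lnz: "L \<noteq> 0" by (simp add: L_def)
  have "to_fract (L ^ (b - a - d) * D') * (to_fract N / to_fract D) = to_fract (L ^ (b - a - d) * D' * N) / to_fract D"
    by simp
  also have "\<dots> = to_fract N' / to_fract (L ^ d)"
  proof (rule frac_eqI)
    show "D \<noteq> 0" by fact
    show "L ^ d \<noteq> 0" using Lnz by simp
    have "L ^ (b - a - d) * D' * N * L ^ d = N' * (L ^ ((b - a - d) + a + d) * D')"
      by (subst N'(1)) (simp add: power_add a_def mult_ac)
    then show "L ^ (b - a - d) * D' * N * L ^ d = N' * D"
      using bad D' b_def by simp
  qed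
  finally have y: "to_fract N' / to_fract (L ^ d) \<in> M" using sub_poly[OF sub x] by metis
  have "prime_elem L" unfolding L_def by (rule prime_elem_linear_field_poly) simp
  then have "coprime L N'" using N'(2) by (rule prime_elem_imp_coprime)
  then have "coprime N' (L ^ d)" by (simp add: coprime_commute)
  from bezout_inv[OF sub one y this] Lnz show ?thesis by (simp add: L_def)
qed

lemma dvd_root: "(g::complex poly) dvd Q \<Longrightarrow> poly g z = 0 \<Longrightarrow> poly Q z = 0"
  by (auto elim!: dvdE)

lemma cst_mult: "cst a * cst b = cst (a * b)"
proof -
  have "cst a * cst b = to_fract ([:a:] * [:b:])" by (simp only: cst_def to_fract_mult)
  also have "[:a:] * [:b:] = [:a * b:]" by (simp add: mult_pCons_left)
  finally show ?thesis by (simp add: cst_def)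
qed

context thm9 begin

lemma Re_r: "Re r1 \<le> \<omega> - 3" "Re r2 \<le> \<omega> - 3" using omega by auto

lemma Cw: "z \<in> C\<omega> \<Longrightarrow> \<omega> \<le> Re z \<and> Re z < \<omega> + 2" using Comega by auto

lemma one_in:
  assumes sub: "is_submodule \<theta> u M" and x: "x \<in> M" "x \<noteq> 0"
  shows "1 \<in> M"
proof -
  obtain p q where pq: "q \<noteq> 0" "x = to_fract p / to_fract q" using fract_rep by blast
  have "to_fract q * x = to_fract p" using pq by simp
  then have pM: "to_fract p \<in> M" using sub_poly[OF sub x(1), of q] by simp
  have p0: "p \<noteq> 0" using pq x by auto
  define G where "G = (\<lambda>g. g \<noteq> 0 \<and> to_fract g \<in> M)"
  define g where "g = arg_min degree G"
  have gG: "G g" and gmin: "\<And>h. G h \<Longrightarrow> degree g \<le> degree h"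
    using arg_min_nat_lemma[of G p degree] p0 pM unfolding g_def G_def by auto
  have g0: "g \<noteq> 0" and gM: "to_fract g \<in> M" using gG G_def by auto
  have gdvd: "g dvd h" if "to_fract h \<in> M" for h
  proof -
    have "to_fract (h mod g) = to_fract h - to_fract (h div g) * to_fract g"
    proof -
      have "to_fract h = to_fract (h div g) * to_fract g + to_fract (h mod g)"
        by (subst div_mult_mod_eq[of h g, symmetric]) (simp only: to_fract_add to_fract_mult)
      then show ?thesis by (simp add: algebra_simps)
    qed
    then have "to_fract (h mod g) \<in> M" using sub_diff[OF sub that sub_poly[OF sub gM]] by simp
    then have "h mod g = 0"
      using degree_mod_less[OF g0, of h] gmin[of "h mod g"] G_def by fastforce
    then show ?thesis by (simp add: mod_eq_0_iff_dvd)
  qed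
  have deg0: "degree g = 0"
  proof (rule ccontr)
    assume dg: "degree g \<noteq> 0"
    define Z where "Z = {z. poly g z = 0}"
    have fZ: "finite Z" using poly_roots_finite[OF g0] Z_def by simp
    have "\<exists>z. poly g z = 0"
      by (rule fundamental_theorem_of_algebra_alt) (use dg in auto)
    then have neZ: "Z \<noteq> {}" using Z_def by auto
    define a0 where "a0 = Min (Re ` Z)"
    define a1 where "a1 = Max (Re ` Z)"
    have "a0 \<in> Re ` Z" using Min_in[of "Re ` Z"] fZ neZ a0_def by auto
    then obtain w0 where w0: "w0 \<in> Z" "Re w0 = a0" by auto
    have "a1 \<in> Re ` Z" using Max_in[of "Re ` Z"] fZ neZ a1_def by auto
    then obtain w1 where w1: "w1 \<in> Z" "Re w1 = a1" by auto
    have lo: "a0 \<le> Re z" if "z \<in> Z" for z using Min_le[of "Re ` Z"] fZ that a0_def by auto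
    have hi: "Re z \<le> a1" if "z \<in> Z" for z using Max_ge[of "Re ` Z"] fZ that a1_def by auto
    have "act_e u (to_fract g / to_fract (P {#})) = to_fract (smult c (pcompose g [:-2,1:]) * P Mpos) / to_fract (P (shm 2 {#} + Mneg))"
      by (rule e_frac)
    then have "act_e u (to_fract g) = to_fract (smult c (pcompose g [:-2,1:]) * P Mpos) / to_fract (P Mneg)"
      by (simp add: shm_def)
    then have "to_fract (P Mneg) * act_e u (to_fract g) = to_fract (smult c (pcompose g [:-2,1:]) * P Mpos)"
      by simp
    then have "to_fract (smult c (pcompose g [:-2,1:]) * P Mpos) \<in> M"
      using sub_poly[OF sub sub_e[OF sub gM]] by metis
    then have "g dvd smult c (pcompose g [:-2,1:]) * P Mpos" by (rule gdvd)
    then have "poly (smult c (pcompose g [:-2,1:]) * P Mpos) w0 = 0"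
      using w0(1) Z_def dvd_root by blast
    then have "poly g (w0 - 2) = 0 \<or> poly (P Mpos) w0 = 0"
      using c_nz by (simp add: poly_pcompose)
    moreover have "poly g (w0 - 2) \<noteq> 0"
    proof
      assume "poly g (w0 - 2) = 0"
      then have "a0 \<le> Re (w0 - 2)" using lo[of "w0 - 2"] Z_def by simp
      then show False using w0 by simp
    qed
    ultimately have "w0 \<in># Mpos" by (simp add: poly_P)
    then have "m w0 > 0" by (simp add: count_Mpos flip: count_greater_zero_iff)
    then have "\<omega> \<le> Re w0" using m_supp Cw by force
    have "act_f \<theta> u (to_fract g / to_fract (P {#})) = to_fract (smult (-1/(4*c)) (pcompose g [:2,1:]) * P ({#r1, r2#} + shm (-2) Mneg)) / to_fract (P (shm (-2) {#} + shm (-2) Mpos))"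
      by (rule f_frac)
    then have "act_f \<theta> u (to_fract g) = to_fract (smult (-1/(4*c)) (pcompose g [:2,1:]) * P ({#r1, r2#} + shm (-2) Mneg)) / to_fract (P (shm (-2) Mpos))"
      by (simp add: shm_def)
    then have "to_fract (P (shm (-2) Mpos)) * act_f \<theta> u (to_fract g) = to_fract (smult (-1/(4*c)) (pcompose g [:2,1:]) * P ({#r1, r2#} + shm (-2) Mneg))"
      by simp
    then have "to_fract (smult (-1/(4*c)) (pcompose g [:2,1:]) * P ({#r1, r2#} + shm (-2) Mneg)) \<in> M"
      using sub_poly[OF sub sub_f[OF sub gM]] by metis
    then have "g dvd smult (-1/(4*c)) (pcompose g [:2,1:]) * P ({#r1, r2#} + shm (-2) Mneg)" by (rule gdvd)
    then have "poly (smult (-1/(4*c)) (pcompose g [:2,1:]) * P ({#r1, r2#} + shm (-2) Mneg)) w1 = 0"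
      using w1(1) Z_def dvd_root by blast
    then have "poly g (w1 + 2) = 0 \<or> poly (P ({#r1, r2#} + shm (-2) Mneg)) w1 = 0"
      using c_nz by (simp add: poly_pcompose add.commute)
    moreover have "poly g (w1 + 2) \<noteq> 0"
    proof
      assume "poly g (w1 + 2) = 0"
      then have "Re (w1 + 2) \<le> a1" using hi[of "w1 + 2"] Z_def by simp
      then show False using w1 by simp
    qed
    ultimately have "w1 \<in># {#r1, r2#} + shm (-2) Mneg" by (simp only: poly_P simp_thms)
    then have "w1 = r1 \<or> w1 = r2 \<or> count Mneg (w1 + 2) > 0"
      by (auto simp: count_shm simp flip: count_greater_zero_iff)
    then have "Re w1 < \<omega>"
    proof (elim disjE)
      assume "0 < count Mneg (w1 + 2)"
      then have "m (w1 + 2) < 0" by (simp add: count_Mneg)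
      then have "w1 + 2 \<in> C\<omega>" using m_supp by auto
      then have "Re (w1 + 2) < \<omega> + 2" using Cw by blast
      then show ?thesis by simp
    qed (use Re_r in auto)
    moreover have "Re w0 \<le> Re w1" using lo hi w0 w1 by auto
    ultimately show False using \<open>\<omega> \<le> Re w0\<close> by simp
  qed
  then obtain k where gk: "g = [:k:]" by (metis degree_eq_zeroE)
  then have k0: "k \<noteq> 0" using g0 by simp
  have "cst (1/k) * to_fract g = to_fract ([:1/k:] * [:k:])" using gk by (simp only: cst_def to_fract_mult)
  also have "[:1/k:] * [:k:] = 1" using k0 by (simp add: mult_pCons_left one_pCons)
  finally have "cst (1/k) * to_fract g = 1" by simp
  then show ?thesis using sub_cst[OF sub gM, of "1/k"] by simp
qed

end

definition polymod :: "ratfun set \<Rightarrow> bool" where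
  "polymod M \<longleftrightarrow> 1 \<in> M \<and> (\<forall>x\<in>M. \<forall>y\<in>M. x + y \<in> M) \<and> (\<forall>g. \<forall>x\<in>M. to_fract g * x \<in> M)"

lemma sub_polymod: "is_submodule th v M \<Longrightarrow> 1 \<in> M \<Longrightarrow> polymod M"
  unfolding polymod_def using sub_add sub_poly by blast

lemma inv_P: "inverse (to_fract (P X)) = to_fract 1 / to_fract (P X)"
  by (simp add: divide_inverse)

lemma order_N1: "c \<noteq> 0 \<Longrightarrow> order w (smult c (pcompose 1 q) * P A) = count A w"
proof -
  assume c: "c \<noteq> 0"
  have "smult c (pcompose 1 q) * P A = smult c (P A)" by (simp only: pcompose_1 mult_smult_left mult_1_left)
  then show ?thesis using c by (simp add: order_smult order_P)
qed

context thm9 begin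

lemma kn: "-1/(4*c) \<noteq> 0" using c_nz by simp

lemma cnt_step_eq:
  assumes "1 \<le> i"
  shows "cnt s (Suc i) = cnt s i + (if r1 = s - 2 * of_nat (Suc i) then 1 else 0)
                                        + (if r2 = s - 2 * of_nat (Suc i) then 1 else 0)"
proof -
  define S where "S = (\<lambda>i. {s - 2 * of_nat l | l. 2 \<le> l \<and> l \<le> i})"
  have e: "S (Suc i) = S i \<union> {s - 2 * of_nat (Suc i)}"
  proof (rule set_eqI, rule iffI)
    fix x assume "x \<in> S (Suc i)"
    then obtain l where "x = s - 2 * of_nat l" "2 \<le> l" "l \<le> Suc i" unfolding S_def by blast
    then show "x \<in> S i \<union> {s - 2 * of_nat (Suc i)}" unfolding S_def using le_Suc_eq by auto
  next
    fix x assume "x \<in> S i \<union> {s - 2 * of_nat (Suc i)}"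
    then show "x \<in> S (Suc i)"
    proof
      assume "x \<in> S i" then show ?thesis unfolding S_def by force
    next
      assume "x \<in> {s - 2 * of_nat (Suc i)}"
      then have "x = s - 2 * of_nat (Suc i)" by simp
      moreover have "2 \<le> Suc i" using assms by simp
      ultimately show ?thesis unfolding S_def by blast
    qed
  qed
  have n: "s - 2 * of_nat (Suc i) \<notin> S i"
  proof
    assume "s - 2 * of_nat (Suc i) \<in> S i"
    then obtain l where l: "s - 2 * of_nat (Suc i) = s - 2 * (of_nat l :: complex)" "l \<le> i" unfolding S_def by blast
    then have "2 * (of_nat (Suc i) :: complex) = 2 * of_nat l" by (metis diff_left_imp_eq)
    then have "(of_nat (Suc i) :: complex) = of_nat l" by (metis mult_cancel_left zero_neq_numeral)
    then have "Suc i = l" by (simp only: of_nat_eq_iff)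
    then show False using l(2) by simp
  qed
  have "cnt s j = (if r1 \<in> S j then 1 else 0) + (if r2 \<in> S j then 1 else 0)" for j
    unfolding cnt_def S_def ..
  then show ?thesis using e n by auto
qed

lemma genA:
  assumes sub: "is_submodule \<theta> u M" and one: "1 \<in> M" and s: "s \<in> C\<omega>" "m s < 0"
  shows "inverse (to_fract ([:-(s + 2 * of_nat i),1:] ^ nat (- m s))) \<in> M"
proof (induction i)
  case 0
  have "act_e u (to_fract 1 / to_fract (P {#})) = to_fract (smult c (pcompose 1 [:-2,1:]) * P Mpos) / to_fract (P (shm 2 {#} + Mneg))"
    by (rule e_frac)
  moreover have "act_e u (to_fract 1 / to_fract (P {#})) \<in> M" using sub_e[OF sub one] by simp
  ultimately have x: "to_fract (smult c (pcompose 1 [:-2,1:]) * P Mpos) / to_fract (P (shm 2 {#} + Mneg)) \<in> M" by simp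
  have ord: "order s (smult c (pcompose 1 [:-2,1:]) * P Mpos) + nat (- m s) \<le> order s (P (shm 2 {#} + Mneg))"
    unfolding order_N1[OF c_nz] order_P using s by (simp add: count_Mpos count_Mneg shm_def)
  have "inverse (to_fract ([:-s,1:] ^ nat (- m s))) \<in> M"
    by (rule tool[OF sub one x _ _ ord]) (simp_all add: c_nz pcompose_1)
  then show ?case by simp
next
  case (Suc i)
  define d where "d = nat (- m s)"
  define w where "w = s + 2 * of_nat i"
  have x0: "to_fract 1 / to_fract (P (replicate_mset d w)) \<in> M"
    using Suc by (simp add: P_replicate d_def w_def divide_inverse)
  have "act_e u (to_fract 1 / to_fract (P (replicate_mset d w))) = to_fract (smult c (pcompose 1 [:-2,1:]) * P Mpos) / to_fract (P (shm 2 (replicate_mset d w) + Mneg))"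
    by (rule e_frac)
  then have x: "to_fract (smult c (pcompose 1 [:-2,1:]) * P Mpos) / to_fract (P (shm 2 (replicate_mset d w) + Mneg)) \<in> M"
    using sub_e[OF sub x0] by simp
  have w2: "w + 2 = s + 2 * of_int (int (Suc i))" by (simp add: w_def)
  have "idx (w + 2) = int (Suc i)" unfolding w2 by (rule idx_rep(1)[OF s(1)])
  then have "m (w + 2) = 0" using m_rep[of "w + 2"] by simp
  then have ord: "order (w + 2) (smult c (pcompose 1 [:-2,1:]) * P Mpos) + d \<le> order (w + 2) (P (shm 2 (replicate_mset d w) + Mneg))"
    unfolding order_N1[OF c_nz] order_P by (simp add: count_Mpos count_shm)
  have "inverse (to_fract ([:-(w+2),1:] ^ d)) \<in> M"
    by (rule tool[OF sub one x _ _ ord]) (simp_all add: c_nz pcompose_1)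
  moreover have "w + 2 = s + 2 * of_nat (Suc i)" by (simp add: w_def)
  ultimately show ?case by (simp add: d_def)
qed

lemma genB:
  assumes sub: "is_submodule \<theta> u M" and one: "1 \<in> M" and s: "s \<in> C\<omega>" "m s > 0"
  shows "0 < m s - cnt s (Suc j) \<Longrightarrow> inverse (to_fract ([:-(s - 2 * of_nat (Suc j)),1:] ^ nat (m s - cnt s (Suc j)))) \<in> M"
proof (induction j)
  case 0
  have "act_f \<theta> u (to_fract 1 / to_fract (P {#})) = to_fract (smult (-1/(4*c)) (pcompose 1 [:2,1:]) * P ({#r1, r2#} + shm (-2) Mneg)) / to_fract (P (shm (-2) {#} + shm (-2) Mpos))"
    by (rule f_frac)
  moreover have "act_f \<theta> u (to_fract 1 / to_fract (P {#})) \<in> M" using sub_f[OF sub one] by simp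
  ultimately have x: "to_fract (smult (-1/(4*c)) (pcompose 1 [:2,1:]) * P ({#r1, r2#} + shm (-2) Mneg)) / to_fract (P (shm (-2) {#} + shm (-2) Mpos)) \<in> M" by simp
  have ne: "r1 \<noteq> s - 2" "r2 \<noteq> s - 2" using Re_r Cw[OF s(1)] by auto
  have c1: "cnt s (Suc 0) = 0" by (simp add: cnt_small)
  have ord: "order (s - 2) (smult (-1/(4*c)) (pcompose 1 [:2,1:]) * P ({#r1, r2#} + shm (-2) Mneg)) + nat (m s - cnt s (Suc 0)) \<le> order (s - 2) (P (shm (-2) {#} + shm (-2) Mpos))"
    unfolding order_N1[OF kn] order_P using s ne c1 by (simp add: count_Mpos count_Mneg count_shm)
  have "inverse (to_fract ([:-(s-2),1:] ^ nat (m s - cnt s (Suc 0)))) \<in> M"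
    by (rule tool[OF sub one x _ _ ord]) (simp_all add: c_nz pcompose_1)
  then show ?case by simp
next
  case (Suc j)
  define i where "i = Suc j"
  have pos: "0 < m s - cnt s (Suc i)" using Suc.prems i_def by simp
  have posi: "0 < m s - cnt s i" using pos cnt_mono[of i "Suc i" s] by simp
  define d where "d = nat (m s - cnt s i)"
  define w where "w = s - 2 * of_nat (Suc i)"
  have x0: "to_fract 1 / to_fract (P (replicate_mset d (w + 2))) \<in> M"
    using Suc.IH posi by (simp add: P_replicate d_def w_def i_def divide_inverse algebra_simps)
  have "act_f \<theta> u (to_fract 1 / to_fract (P (replicate_mset d (w + 2)))) = to_fract (smult (-1/(4*c)) (pcompose 1 [:2,1:]) * P ({#r1, r2#} + shm (-2) Mneg)) / to_fract (P (shm (-2) (replicate_mset d (w + 2)) + shm (-2) Mpos))"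
    by (rule f_frac)
  then have x: "to_fract (smult (-1/(4*c)) (pcompose 1 [:2,1:]) * P ({#r1, r2#} + shm (-2) Mneg)) / to_fract (P (shm (-2) (replicate_mset d (w + 2)) + shm (-2) Mpos)) \<in> M"
    using sub_f[OF sub x0] by simp
  have w2: "w + 2 = s + 2 * of_int (- int i)" by (simp add: w_def algebra_simps)
  have "idx (w + 2) = - int i" unfolding w2 by (rule idx_rep(1)[OF s(1)])
  then have m0: "m (w + 2) = 0" using m_rep[of "w + 2"] i_def by simp
  have st: "cnt s (Suc i) = cnt s i + (if r1 = w then 1 else 0) + (if r2 = w then 1 else 0)"
    using cnt_step_eq[of i s] i_def by (simp add: w_def)
  have ord: "order w (smult (-1/(4*c)) (pcompose 1 [:2,1:]) * P ({#r1, r2#} + shm (-2) Mneg)) + nat (m s - cnt s (Suc i)) \<le> order w (P (shm (-2) (replicate_mset d (w + 2)) + shm (-2) Mpos))"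
  proof -
    have "order w (smult (-1/(4*c)) (pcompose 1 [:2,1:]) * P ({#r1, r2#} + shm (-2) Mneg)) = (if w = r1 then 1 else 0) + (if w = r2 then 1 else 0)"
    proof -
      have c0: "count (shm (-2) Mneg) w = 0" by (simp add: count_shm count_Mneg m0)
      show ?thesis unfolding order_N1[OF kn] count_union c0 by simp
    qed
    moreover have "d \<le> order w (P (shm (-2) (replicate_mset d (w + 2)) + shm (-2) Mpos))"
      unfolding order_P count_union count_shm by simp
    moreover have "int ((if w = r1 then 1 else 0) + (if w = r2 then 1 else 0)) + (m s - cnt s (Suc i)) \<le> int d"
      using st posi d_def by auto
    ultimately show ?thesis using pos by linarith
  qed
  have "inverse (to_fract ([:-w,1:] ^ nat (m s - cnt s (Suc i)))) \<in> M"
    by (rule tool[OF sub one x _ _ ord]) (simp_all add: c_nz pcompose_1)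
  then show ?case by (simp add: w_def i_def)
qed

end

lemma polymod_poly: "polymod M \<Longrightarrow> x \<in> M \<Longrightarrow> to_fract g * x \<in> M"
  unfolding polymod_def by blast
lemma polymod_add: "polymod M \<Longrightarrow> x \<in> M \<Longrightarrow> y \<in> M \<Longrightarrow> x + y \<in> M"
  unfolding polymod_def by blast
lemma polymod_one: "polymod M \<Longrightarrow> 1 \<in> M"
  unfolding polymod_def by blast

lemma fld1: "x \<noteq> 0 \<Longrightarrow> y \<noteq> 0 \<Longrightarrow> (a * x + b * y) / (x * y) = a * inverse y + b * inverse (x::'a::field)"
  by (simp add: field_simps)

lemma fld2: "z \<noteq> 0 \<Longrightarrow> x \<noteq> 0 \<Longrightarrow> x * inverse (x * z) = inverse (z::'a::field)"
  by (simp add: field_simps)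

context thm9 begin

lemma Bpos_cases:
  assumes "0 < B w"
  obtains (A) s i where "s \<in> C\<omega>" "m s < 0" "w = s + 2 * of_nat i" "B w = nat (- m s)"
        | (B) s j where "s \<in> C\<omega>" "m s > 0" "w = s - 2 * of_nat (Suc j)" "B w = nat (m s - cnt s (Suc j))"
proof -
  define s where "s = rep w"
  define n where "n = idx w"
  have s: "s \<in> C\<omega>" using rep_in s_def by simp
  have w: "w = s + 2 * of_int n" using w_decomp s_def n_def by simp
  have Bw: "B w = (if m s < 0 \<and> 0 \<le> n then nat (- m s)
          else if 0 < m s \<and> n < 0 then nat (m s - cnt s (nat (- n))) else 0)"
    by (simp add: B_def s_def n_def)
  show ?thesis
  proof (cases "m s < 0 \<and> 0 \<le> n")
    case True
    then have "w = s + 2 * of_nat (nat n)" using w by simp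
    then show ?thesis using A[of s "nat n"] s True Bw by simp
  next
    case False
    then have c: "0 < m s \<and> n < 0" using assms Bw by (auto split: if_splits)
    define j where "j = nat (- n) - 1"
    have nj: "nat (- n) = Suc j" using c j_def by simp
    have "n = - int (Suc j)" using nj c by linarith
    then have "w = s - 2 * of_nat (Suc j)" using w by simp
    then show ?thesis using B[of s j] s c Bw nj False by simp
  qed
qed

lemma single_max:
  assumes sub: "is_submodule \<theta> u M" and one: "1 \<in> M" and pos: "0 < B w"
  shows "inverse (to_fract ([:-w,1:] ^ B w)) \<in> M"
  using pos
proof (cases rule: Bpos_cases)
  case (A s i)
  then show ?thesis using genA[OF sub one A(1,2), of i] by simp
next
  case (B s j)
  then have "0 < m s - cnt s (Suc j)" using pos by simp
  then show ?thesis using genB[OF sub one B(1,2), of j] B by simp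
qed

lemma single:
  assumes pm: "polymod M" and mx: "\<And>w. 0 < B w \<Longrightarrow> inverse (to_fract ([:-w,1:] ^ B w)) \<in> M"
    and k: "k \<le> B w"
  shows "inverse (to_fract ([:-w,1:] ^ k)) \<in> M"
proof (cases "k = 0")
  case True then show ?thesis using polymod_one[OF pm] by simp
next
  case False
  then have p: "0 < B w" using k by simp
  have "to_fract ([:-w,1:] ^ (B w - k)) * inverse (to_fract ([:-w,1:] ^ B w)) = inverse (to_fract ([:-w,1:] ^ k))"
  proof -
    have "B w = (B w - k) + k" using k by simp
    then have "[:-w,1:] ^ B w = [:-w,1:] ^ (B w - k) * [:-w,1:] ^ k" by (metis power_add)
    then show ?thesis using fld2[of "to_fract ([:-w,1:] ^ k)" "to_fract ([:-w,1:] ^ (B w - k))"] by simp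
  qed
  then show ?thesis using polymod_poly[OF pm mx[OF p]] by metis
qed

lemma gen_generic:
  assumes pm: "polymod M" and mx: "\<And>w. 0 < B w \<Longrightarrow> inverse (to_fract ([:-w,1:] ^ B w)) \<in> M"
  shows "Kp \<subseteq> M"
proof -
  have main: "\<And>X. set_mset X \<subseteq> S \<Longrightarrow> X \<in> Den \<Longrightarrow> inverse (to_fract (P X)) \<in> M" if fS: "finite S" for S
    using fS
  proof (induction S rule: finite_induct)
    case empty
    then show ?case using polymod_one[OF pm] by simp
  next
    case (insert w S X)
    define X1 where "X1 = filter_mset (\<lambda>z. z = w) X"
    define X2 where "X2 = filter_mset (\<lambda>z. z \<noteq> w) X"
    have XX: "X = X1 + X2" unfolding X1_def X2_def by (rule multiset_partition)
    have X1: "X1 = replicate_mset (count X w) w" unfolding X1_def by (rule filter_eq_replicate_mset)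
    have X2S: "set_mset X2 \<subseteq> S" using insert.prems(1) unfolding X2_def by auto
    have X2D: "X2 \<in> Den" using insert.prems(2) unfolding X2_def Den_def
      by (auto simp: count_filter_mset)
    have i2: "inverse (to_fract (P X2)) \<in> M" using insert.IH[OF X2S X2D] .
    have cw: "count X w \<le> B w" using insert.prems(2) Den_def by auto
    have i1: "inverse (to_fract (P X1)) \<in> M" unfolding X1 P_replicate by (rule single[OF pm mx cw])
    have wn: "w \<notin># X2" unfolding X2_def by simp
    have "prime_elem [:-w,1:]" by (rule prime_elem_linear_field_poly) simp
    moreover have "\<not> [:-w,1:] dvd P X2" using wn poly_P[of X2 w] by (simp add: dvd_iff_poly_eq_0)
    ultimately have "coprime [:-w,1:] (P X2)" by (rule prime_elem_imp_coprime)
    then have cop: "coprime (P X1) (P X2)" unfolding X1 P_replicate by simp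
    obtain a b where ab: "a * P X1 + b * P X2 = 1" using coprime_bezout_poly[OF cop] by blast
    have "inverse (to_fract (P X)) = to_fract (a * P X1 + b * P X2) / (to_fract (P X1) * to_fract (P X2))"
      using XX ab by (simp add: divide_inverse)
    also have "\<dots> = to_fract a * inverse (to_fract (P X2)) + to_fract b * inverse (to_fract (P X1))"
      using fld1[of "to_fract (P X1)" "to_fract (P X2)"] by simp
    finally show ?case
      using polymod_add[OF pm polymod_poly[OF pm i2] polymod_poly[OF pm i1]] by metis
  qed
  show ?thesis
  proof
    fix x assume "x \<in> Kp"
    then obtain p X where x: "x = to_fract p / to_fract (P X)" "X \<in> Den" unfolding Kp_def by blast
    have "inverse (to_fract (P X)) \<in> M" using main[OF finite_set_mset subset_refl x(2)] .
    then show "x \<in> M" using polymod_poly[OF pm] x(1) by (metis divide_inverse)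
  qed
qed

lemma sub_gen: "is_submodule \<theta> u M \<Longrightarrow> 1 \<in> M \<Longrightarrow> Kp \<subseteq> M"
  by (rule gen_generic[OF sub_polymod single_max])

end

lemma cst_add: "cst (a + b) = cst a + cst b" by (simp add: cst_def flip: to_fract_add)
lemma cst_0: "cst 0 = 0" by (simp add: cst_def)
lemma cst_1: "cst 1 = 1" by (simp add: cst_def flip: one_pCons)

lemma cspan_iff: "x \<in> cspan S \<longleftrightarrow> (\<exists>T c. x = (\<Sum>z\<in>T. cst (c z) * z) \<and> finite T \<and> T \<subseteq> S)"
  unfolding cspan_def by blast

lemma cspan_zero: "0 \<in> cspan S"
  unfolding cspan_iff by (rule exI[of _ "{}"], rule exI[of _ "\<lambda>_. 0"]) simp

lemma cspan_gen: "x \<in> S \<Longrightarrow> x \<in> cspan S"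
  unfolding cspan_iff by (rule exI[of _ "{x}"], rule exI[of _ "\<lambda>_. 1"]) (simp add: cst_1)

lemma cspan_add: "x \<in> cspan S \<Longrightarrow> y \<in> cspan S \<Longrightarrow> x + y \<in> cspan S"
proof -
  assume "x \<in> cspan S" "y \<in> cspan S"
  then obtain T1 c1 T2 c2 where x: "x = (\<Sum>z\<in>T1. cst (c1 z) * z)" "finite T1" "T1 \<subseteq> S"
    and y: "y = (\<Sum>z\<in>T2. cst (c2 z) * z)" "finite T2" "T2 \<subseteq> S"
    unfolding cspan_def by blast
  define c where "c = (\<lambda>z. (if z \<in> T1 then c1 z else 0) + (if z \<in> T2 then c2 z else 0))"
  have "(\<Sum>z\<in>T1 \<union> T2. cst (c z) * z) = (\<Sum>z\<in>T1 \<union> T2. (if z \<in> T1 then cst (c1 z) * z else 0)) + (\<Sum>z\<in>T1 \<union> T2. (if z \<in> T2 then cst (c2 z) * z else 0))"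
    unfolding sum.distrib[symmetric] by (rule sum.cong) (simp_all add: c_def cst_add cst_0 distrib_right)
  also have "\<dots> = x + y"
    using x y by (simp add: sum.If_cases Int_absorb1)
  finally have "x + y = (\<Sum>z\<in>T1 \<union> T2. cst (c z) * z)" by simp
  then show ?thesis unfolding cspan_iff using x y by blast
qed

lemma cspan_cst: "x \<in> cspan S \<Longrightarrow> cst a * x \<in> cspan S"
proof -
  assume "x \<in> cspan S"
  then obtain T c where x: "x = (\<Sum>z\<in>T. cst (c z) * z)" "finite T" "T \<subseteq> S"
    unfolding cspan_def by blast
  have "cst a * x = (\<Sum>z\<in>T. cst (a * c z) * z)"
    unfolding x(1) by (simp add: sum_distrib_left mult.assoc flip: cst_mult)
  then show ?thesis unfolding cspan_iff using x by (intro exI[of _ T] exI[of _ "\<lambda>z. a * c z"]) simp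
qed

lemma cspan_sum: "finite T \<Longrightarrow> (\<And>z. z \<in> T \<Longrightarrow> f z \<in> cspan S) \<Longrightarrow> sum f T \<in> cspan S"
  by (induction T rule: finite_induct) (auto intro: cspan_zero cspan_add)

lemma cspan_hom:
  assumes "\<And>z. z \<in> S \<Longrightarrow> hvar * z \<in> cspan S" and "x \<in> cspan S"
  shows "hvar * x \<in> cspan S"
proof -
  obtain T c where x: "x = (\<Sum>z\<in>T. cst (c z) * z)" "finite T" "T \<subseteq> S"
    using assms(2) unfolding cspan_def by blast
  have "hvar * x = (\<Sum>z\<in>T. cst (c z) * (hvar * z))"
    unfolding x(1) by (simp add: sum_distrib_left mult_ac)
  also have "\<dots> \<in> cspan S" using x assms(1) by (intro cspan_sum cspan_cst) auto
  finally show ?thesis .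
qed

lemma cspan_poly:
  assumes "\<And>z. z \<in> S \<Longrightarrow> hvar * z \<in> cspan S" and "x \<in> cspan S"
  shows "to_fract g * x \<in> cspan S"
proof (induction g rule: pCons_induct)
  case 0 then show ?case using cspan_zero by simp
next
  case (pCons a g)
  have "to_fract (pCons a g) * x = cst a * x + hvar * (to_fract g * x)"
    by (subst pCons_split) (simp add: cst_def hvar_def distrib_right mult.assoc)
  then show ?case using pCons cspan_add cspan_cst[OF assms(2)] cspan_hom[OF assms(1)] by metis
qed

lemma cspan_sub: "(\<And>x y. x \<in> M \<Longrightarrow> y \<in> M \<Longrightarrow> x + y \<in> M) \<Longrightarrow> (\<And>a x. x \<in> M \<Longrightarrow> cst a * x \<in> M) \<Longrightarrow> 0 \<in> M
   \<Longrightarrow> S \<subseteq> M \<Longrightarrow> cspan S \<subseteq> M"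
proof
  fix x assume h: "\<And>x y. x \<in> M \<Longrightarrow> y \<in> M \<Longrightarrow> x + y \<in> M" "\<And>a x. x \<in> M \<Longrightarrow> cst a * x \<in> M" "0 \<in> M" "S \<subseteq> M"
    and "x \<in> cspan S"
  then obtain T c where x: "x = (\<Sum>z\<in>T. cst (c z) * z)" "finite T" "T \<subseteq> S"
    unfolding cspan_def by blast
  have "(\<Sum>z\<in>T. cst (c z) * z) \<in> M" using x(2,3)
    by (induction T rule: finite_induct) (use h in auto)
  then show "x \<in> M" using x(1) by simp
qed

lemma hvar_shift: "hvar - cst s + cst a = to_fract [:-(s - a),1:]"
proof -
  have "hvar - cst s + cst a = to_fract ([:0,1:] - [:s:] + [:a:])" by (simp only: hvar_def cst_def to_fract_add to_fract_diff)
  also have "[:0,1:] - [:s:] + [:a:] = [:-(s - a),1::complex:]" by simp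
  finally show ?thesis .
qed

context thm9 begin

definition Gfam where "Gfam = {inverse (to_fract ([:-w,1:] ^ k)) | w k. 1 \<le> k \<and> k \<le> B w}"

lemma B_A: "s \<in> C\<omega> \<Longrightarrow> m s < 0 \<Longrightarrow> B (s + 2 * of_nat i) = nat (- m s)"
  using idx_rep[of s "int i"] by (simp add: B_def)

lemma B_B: "s \<in> C\<omega> \<Longrightarrow> m s > 0 \<Longrightarrow> 1 \<le> i \<Longrightarrow> B (s - 2 * of_nat i) = nat (m s - cnt s i)"
  using idx_rep[of s "- int i"] by (simp add: B_def)

lemma G_eq:
  "{inverse ((hvar - cst (s + 2 * of_nat i)) ^ k) | s i k.
            s \<in> C\<omega> \<and> m s < 0 \<and> 1 \<le> k \<and> int k \<le> - m s}
       \<union> {inverse ((hvar - cst s + cst (2 * of_nat i)) ^ k) | s i k.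
            s \<in> C\<omega> \<and> m s > 0 \<and> 1 \<le> i \<and> 1 \<le> k \<and>
            int k \<le> m s - ((if r1 \<in> {s - 2 * of_nat l | l. 2 \<le> l \<and> l \<le> i} then 1 else 0)
                        + (if r2 \<in> {s - 2 * of_nat l | l. 2 \<le> l \<and> l \<le> i} then 1 else 0))}
   = Gfam" (is "?G2 \<union> ?G3 = _")
proof (intro equalityI subsetI)
  fix x assume "x \<in> ?G2 \<union> ?G3"
  then show "x \<in> Gfam"
  proof
    assume "x \<in> ?G2"
    then obtain s i k where x: "x = inverse ((hvar - cst (s + 2 * of_nat i)) ^ k)"
      "s \<in> C\<omega>" "m s < 0" "1 \<le> k" "int k \<le> - m s" by blast
    have "x = inverse (to_fract ([:-(s + 2 * of_nat i),1:] ^ k))" using x(1) by (simp add: hvar_minus_cst to_fract_power)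
    moreover have "k \<le> B (s + 2 * of_nat i)" using B_A[OF x(2,3)] x(5) by simp
    ultimately show ?thesis unfolding Gfam_def using x(4) by blast
  next
    assume "x \<in> ?G3"
    then obtain s i k where x: "x = inverse ((hvar - cst s + cst (2 * of_nat i)) ^ k)"
      "s \<in> C\<omega>" "m s > 0" "1 \<le> i" "1 \<le> k" "int k \<le> m s - cnt s i"
      unfolding cnt_def by blast
    have "x = inverse (to_fract ([:-(s - 2 * of_nat i),1:] ^ k))" using x(1) by (simp add: hvar_shift to_fract_power)
    moreover have "k \<le> B (s - 2 * of_nat i)" using B_B[OF x(2,3,4)] x(6) by simp
    ultimately show ?thesis unfolding Gfam_def using x(5) by blast
  qed
next
  fix x assume "x \<in> Gfam"
  then obtain w k where x: "x = inverse (to_fract ([:-w,1:] ^ k))" "1 \<le> k" "k \<le> B w"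
    unfolding Gfam_def by blast
  then have "0 < B w" by simp
  then show "x \<in> ?G2 \<union> ?G3"
  proof (cases rule: Bpos_cases)
    case (A s i)
    have "x = inverse ((hvar - cst (s + 2 * of_nat i)) ^ k)" using x(1) A(3) by (simp add: hvar_minus_cst to_fract_power)
    moreover have "int k \<le> - m s" using x(3) A(2,4) by simp
    ultimately have "x \<in> ?G2" using A(1,2) x(2) by blast
    then show ?thesis by blast
  next
    case (B s j)
    have "x = inverse ((hvar - cst s + cst (2 * of_nat (Suc j))) ^ k)" using x(1) B(3) by (simp add: hvar_shift to_fract_power)
    moreover have "int k \<le> m s - cnt s (Suc j)" using x(2,3) B(4) by simp
    ultimately have "x \<in> ?G3" using B(1,2) x(2) unfolding cnt_def by (intro UnI2 CollectI exI[of _ s] exI[of _ "Suc j"] exI[of _ k]) auto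
    then show ?thesis by blast
  qed
qed

lemma cspan_Kp: "cspan ({to_fract p | p. True} \<union> Gfam) = Kp"
proof
  show "cspan ({to_fract p | p. True} \<union> Gfam) \<subseteq> Kp"
  proof (rule cspan_sub)
    show "{to_fract p | p. True} \<union> Gfam \<subseteq> Kp"
    proof
      fix x assume "x \<in> {to_fract p | p. True} \<union> Gfam"
      then show "x \<in> Kp"
      proof
        assume "x \<in> {to_fract p | p. True}" then show ?thesis using Kp_poly by blast
      next
        assume "x \<in> Gfam"
        then obtain w k where x: "x = inverse (to_fract ([:-w,1:] ^ k))" "k \<le> B w"
          unfolding Gfam_def by blast
        have "replicate_mset k w \<in> Den" using x(2) by (simp add: Den_def)
        from KpI[OF this, of 1] show ?thesis using x(1) by (simp add: P_replicate divide_inverse)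
      qed
    qed
  qed (use Kp_add Kp_cst Kp_zero in auto)
next
  let ?S = "{to_fract p | p. True} \<union> Gfam"
  have hS: "hvar * z \<in> cspan ?S" if "z \<in> ?S" for z
    using that
  proof
    assume "z \<in> {to_fract p | p. True}"
    then obtain p where "z = to_fract p" by blast
    then have e: "hvar * z = to_fract ([:0,1:] * p)" by (simp add: hvar_def)
    have "to_fract ([:0,1:] * p) \<in> ?S" by blast
    then show ?thesis unfolding e by (rule cspan_gen)
  next
    assume "z \<in> Gfam"
    then obtain w k where z: "z = inverse (to_fract ([:-w,1:] ^ k))" "1 \<le> k" "k \<le> B w"
      unfolding Gfam_def by blast
    define L where "L = to_fract [:-w,1:]"
    have L0: "L \<noteq> 0" by (simp add: L_def)
    have hv: "hvar = L + cst w" by (simp add: L_def hvar_def cst_def flip: to_fract_add)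
    obtain k' where k': "k = Suc k'" using z(2) by (cases k) auto
    have "hvar * z = inverse (L ^ k') + cst w * z"
      unfolding hv z(1) k' using L0 by (simp add: L_def to_fract_power field_simps)
    moreover have "inverse (L ^ k') \<in> cspan ?S"
    proof (cases "k' = 0")
      case True then show ?thesis by (auto intro!: cspan_gen exI[of _ 1])
    next
      case False
      then have "inverse (L ^ k') \<in> Gfam" unfolding Gfam_def L_def using z(3) k'
        by (intro CollectI exI[of _ w] exI[of _ k']) (simp add: to_fract_power)
      then show ?thesis by (auto intro: cspan_gen)
    qed
    moreover have "cst w * z \<in> cspan ?S" using \<open>z \<in> Gfam\<close> by (auto intro: cspan_cst cspan_gen)
    ultimately show ?thesis by (auto intro: cspan_add)
  qed
  have pm: "polymod (cspan ?S)"
    unfolding polymod_def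
  proof (intro conjI ballI allI)
    show "1 \<in> cspan ?S" by (rule cspan_gen) (auto intro!: exI[of _ 1])
  next
    fix x y assume "x \<in> cspan ?S" "y \<in> cspan ?S" then show "x + y \<in> cspan ?S" by (rule cspan_add)
  next
    fix g x assume xs: "x \<in> cspan ?S"
    show "to_fract g * x \<in> cspan ?S" by (rule cspan_poly[of ?S, OF _ xs]) (rule hS)
  qed
  have mx: "inverse (to_fract ([:-w,1:] ^ B w)) \<in> cspan ?S" if "0 < B w" for w
    using that unfolding Gfam_def by (intro cspan_gen UnI2 CollectI exI[of _ w] exI[of _ "B w"]) auto
  show "Kp \<subseteq> cspan ?S" by (rule gen_generic[OF pm mx])
qed

lemma Kp_one: "1 \<in> Kp" using Kp_poly[of 1] by simp

lemma Kp_simple: "is_simple_submodule \<theta> u Kp"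
  unfolding is_simple_submodule_def
proof (intro conjI allI impI)
  show "is_submodule \<theta> u Kp" by (rule Kp_sub)
  show "Kp \<noteq> {0}" using Kp_one by force
  fix M' assume h: "is_submodule \<theta> u M' \<and> M' \<subseteq> Kp"
  have hs: "is_submodule \<theta> u M'" using h by (rule conjunct1)
  have hk: "M' \<subseteq> Kp" using h by (rule conjunct2)
  show "M' = {0} \<or> M' = Kp"
  proof (cases "\<exists>x\<in>M'. x \<noteq> 0")
    case True
    then obtain x where "x \<in> M'" "x \<noteq> 0" by blast
    then have "1 \<in> M'" by (rule one_in[OF hs])
    then have "Kp \<subseteq> M'" by (rule sub_gen[OF hs])
    then show ?thesis using hk by blast
  next
    case False
    then have "M' \<subseteq> {0}" by blast
    then show ?thesis using sub_0[OF hs] by blast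
  qed
qed

lemma L_eq: "L_u \<theta> u = Kp"
  unfolding L_u_def
proof (rule the_equality)
  show "is_simple_submodule \<theta> u Kp" by (rule Kp_simple)
  fix M assume M: "is_simple_submodule \<theta> u M"
  then have MM: "is_submodule \<theta> u M \<and> M \<noteq> {0} \<and> (\<forall>M'. is_submodule \<theta> u M' \<and> M' \<subseteq> M \<longrightarrow> M' = {0} \<or> M' = M)"
    unfolding is_simple_submodule_def .
  have sub: "is_submodule \<theta> u M" using MM by (rule conjunct1)
  have ne: "M \<noteq> {0}" using MM by (metis conjunct1 conjunct2)
  have mn: "is_submodule \<theta> u Kp \<and> Kp \<subseteq> M \<longrightarrow> Kp = {0} \<or> Kp = M"
    using MM by (metis conjunct2)
  have "\<exists>x\<in>M. x \<noteq> 0"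
  proof (rule ccontr)
    assume "\<not> (\<exists>x\<in>M. x \<noteq> 0)"
    then have "M \<subseteq> {0}" by blast
    then show False using ne sub_0[OF sub] by blast
  qed
  then obtain x where "x \<in> M" "x \<noteq> 0" by blast
  then have "1 \<in> M" by (rule one_in[OF sub])
  then have "Kp \<subseteq> M" by (rule sub_gen[OF sub])
  then have "Kp = {0} \<or> Kp = M" using mn Kp_sub by blast
  then show "M = Kp" using Kp_one by force
qed

end

theorem theorem9:
  fixes \<theta> r1 r2 c :: complex and m :: "complex \<Rightarrow> int" and \<omega> :: real
    and C\<omega> :: "complex set" and u :: ratfun and K :: "ratfun set"
  assumes roots: "[:\<theta> - 1, -2, -1:] = - ([:-r1, 1:] * [:-r2, 1:])"
    and omega: "\<omega> = 3 + max (Re r1) (Re r2)"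
    and Comega: "C\<omega> = {z. \<omega> \<le> Re z \<and> Re z < \<omega> + 2}"
    and c_nz: "c \<noteq> 0"
    and m_fin: "finite {t. m t \<noteq> 0}"
    and m_supp: "\<forall>t. m t \<noteq> 0 \<longrightarrow> t \<in> C\<omega>"
    and u_def: "u = cst c * (\<Prod>t\<in>{t. m t \<noteq> 0}. (hvar - cst t) powi (m t))"
    and K_def: "K = cspan (
         {to_fract p | p. True}
       \<union> {inverse ((hvar - cst (s + 2 * of_nat i)) ^ k) | s i k.
            s \<in> C\<omega> \<and> m s < 0 \<and> 1 \<le> k \<and> int k \<le> - m s}
       \<union> {inverse ((hvar - cst s + cst (2 * of_nat i)) ^ k) | s i k.
            s \<in> C\<omega> \<and> m s > 0 \<and> 1 \<le> i \<and> 1 \<le> k \<and>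
            int k \<le> m s - ((if r1 \<in> {s - 2 * of_nat l | l. 2 \<le> l \<and> l \<le> i} then 1 else 0)
                        + (if r2 \<in> {s - 2 * of_nat l | l. 2 \<le> l \<and> l \<le> i} then 1 else 0))})"
  shows "K = L_u \<theta> u"
proof -
  interpret thm9 \<theta> r1 r2 c m \<omega> C\<omega> u
    using assms by unfold_locales auto
  have "K = cspan ({to_fract p | p. True} \<union> Gfam)"
    unfolding K_def G_eq[symmetric] by (simp only: Un_assoc)
  then show ?thesis using cspan_Kp L_eq by simp
qed

end
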